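(* Let $x>0$ and $0\le p\le 1$. Then $$W_p(x,1)\le p(1-p)\left(\sqrt{x}-1\right)^2+L(x,1)\le A(x,1).$$ Equivalently (by homogeneity), for all $x,y>0$ and $0\le p\le 1$: $W_p(x,y)\le p(1-p)(\sqrt{x}-\sqrt{y})^2+L(x,y)\le A(x,y)$.
   Context: For $x,y>0$: $A(x,y)=\frac{x+y}{2}$; $L(x,y)=\frac{x-y}{\log x-\log y}$ for $x\ne y$ and $L(x,x)=x$ (logarithmic mean). The Wigner--Yanase--Dyson function is $W_p(x,y)=\frac{p(1-p)(x-y)^2}{(x^p-y^p)(x^{1-p}-y^{1-p})}$ for $x\neq y$, $p\notin\{0,1\}$, with $W_p(x,x)=x$, and for $p\in\{0,1\}$ defined by its limiting value $W_0(x,y)=W_1(x,y)=L(x,y)$. *)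

theory Defs
  imports Complex_Main
begin

definition AM :: "real \<Rightarrow> real \<Rightarrow> real" where
  "AM x y = (x + y) / 2"

definition LM :: "real \<Rightarrow> real \<Rightarrow> real" where
  "LM x y = (if x = y then x else (x - y) / (ln x - ln y))"

text \<open>Wigner--Yanase--Dyson function; for p in {0,1} its limiting value L.\<close>
definition WYD :: "real \<Rightarrow> real \<Rightarrow> real \<Rightarrow> real" where
  "WYD p x y =
    (if p = 0 \<or> p = 1 then LM x y
     else if x = y then x
     else p * (1 - p) * (x - y)^2 / ((x powr p - y powr p) * (x powr (1 - p) - y powr (1 - p))))"

end

theory Submission imports Defs begin

lemma sinh_ge: fixes t :: real assumes "0 \<le> t" shows "t \<le> sinh t"
  using real_le_x_sinh[OF assms] by (simp add: sinh_def exp_minus)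



lemma tanh_le: fixes v :: real assumes "0 \<le> v" shows "sinh v \<le> v * cosh v"
proof -
  have "0 * cosh 0 - sinh 0 \<le> v * cosh v - sinh v"
  proof (rule DERIV_nonneg_imp_nondecreasing[OF assms])
    fix t :: real assume "0 \<le> t" "t \<le> v"
    show "\<exists>y. ((\<lambda>t. t * cosh t - sinh t) has_real_derivative y) (at t) \<and> 0 \<le> y"
      by (rule exI[of _ "t * sinh t"]) (auto intro!: derivative_eq_intros simp: \<open>0 \<le> t\<close>)
  qed
  then show ?thesis by simp
qed

lemma sc_ge: fixes t :: real assumes "0 \<le> t" shows "t \<le> sinh t * cosh t"
  using sinh_ge[of "2*t"] assms by (simp add: sinh_double)

lemma coth_mono: fixes v w :: real assumes "0 < w" "w \<le> v"
  shows "w * cosh w * sinh v \<le> v * cosh v * sinh w"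
proof -
  have "w * cosh w / sinh w \<le> v * cosh v / sinh v"
  proof (rule DERIV_nonneg_imp_nondecreasing[OF assms(2)])
    fix t :: real assume t: "w \<le> t" "t \<le> v"
    then have tp: "t > 0" using assms by simp
    then have sp: "sinh t > 0" by simp
    show "\<exists>y. ((\<lambda>t. t * cosh t / sinh t) has_real_derivative y) (at t) \<and> 0 \<le> y"
    proof (rule exI[of _ "(sinh t * cosh t - t) / (sinh t)^2"], rule conjI)
      show "((\<lambda>t. t * cosh t / sinh t) has_real_derivative (sinh t * cosh t - t) / (sinh t)^2) (at t)"
        using sp cosh_square_eq[of t] by (auto intro!: derivative_eq_intros simp: field_simps power2_eq_square)
      show "0 \<le> (sinh t * cosh t - t) / (sinh t)^2" using sc_ge[of t] tp by simp
    qed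
  qed
  moreover have "sinh w > 0" "sinh v > 0" using assms by auto
  ultimately show ?thesis by (simp add: field_simps)
qed

lemma core: fixes v w :: real assumes "0 \<le> w" "w \<le> v"
  shows "(v^2 - w^2) * sinh v * (cosh w)^2 \<le> v * cosh v * ((sinh v)^2 - (sinh w)^2)"
proof -
  define h where "h t = v * cosh v * ((sinh v)^2 - (sinh t)^2) - (v^2 - t^2) * sinh v * (cosh t)^2" for t
  have "h v \<le> h w"
  proof (rule DERIV_nonpos_imp_nonincreasing[OF assms(2)])
    fix t :: real assume t: "w \<le> t" "t \<le> v"
    define d where "d = 2 * cosh t * (t * sinh v * cosh t - v * cosh v * sinh t - (v^2 - t^2) * sinh v * sinh t)"
    have "(h has_real_derivative d) (at t)"
      unfolding h_def[abs_def] d_def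
      by (rule derivative_eq_intros refl)+ (simp add: algebra_simps power2_eq_square)
    moreover have "d \<le> 0"
    proof (cases "t = 0")
      case True then show ?thesis by (simp add: d_def)
    next
      case False
      then have tp: "0 < t" using t assms by simp
      have a: "t * cosh t * sinh v \<le> v * cosh v * sinh t" by (rule coth_mono[OF tp t(2)])
      have b: "0 \<le> (v^2 - t^2) * sinh v * sinh t"
        using t tp by (intro mult_nonneg_nonneg) (auto intro: power_mono)
      have "t * sinh v * cosh t - v * cosh v * sinh t - (v^2 - t^2) * sinh v * sinh t \<le> 0"
        using a b by (simp add: algebra_simps)
      then show ?thesis unfolding d_def by (simp add: mult_nonneg_nonpos)
    qed
    ultimately show "\<exists>y. (h has_real_derivative y) (at t) \<and> y \<le> 0" by blast
  qed
  then show ?thesis by (simp add: h_def)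
qed


lemma ex_sinh: "exp (a + b) - exp (a - b) = 2 * exp a * sinh (b::real)"
proof -
  have "exp (a - b) = exp a * exp (-b)" by (simp flip: exp_add)
  then show ?thesis by (simp add: sinh_field_def exp_add algebra_simps)
qed

lemma ex_cosh: "exp (a + b) + exp (a - b) = 2 * exp a * cosh (b::real)"
proof -
  have "exp (a - b) = exp a * exp (-b)" by (simp flip: exp_add)
  then show ?thesis by (simp add: cosh_field_def exp_add algebra_simps)
qed

lemma core': fixes v w :: real assumes "\<bar>w\<bar> \<le> v"
  shows "(v^2 - w^2) * sinh v * (cosh w)^2 \<le> v * cosh v * ((sinh v)^2 - (sinh w)^2)"
  using core[of "\<bar>w\<bar>" v] assms by (simp add: power2_abs)

lemma main_gt:
  fixes x y p :: real
  assumes "0 < y" "y < x" "0 \<le> p" "p \<le> 1"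
  shows "WYD p x y \<le> p * (1 - p) * (sqrt x - sqrt y)^2 + LM x y
       \<and> p * (1 - p) * (sqrt x - sqrt y)^2 + LM x y \<le> AM x y"
proof -
  have x0: "0 < x" using assms by simp
  define m where "m = (ln x + ln y) / 2"
  define v where "v = (ln x - ln y) / 4"
  define w where "w = (2 * p - 1) * v"
  define E where "E = exp m"
  define S where "S = sinh v"
  define C where "C = cosh v"
  define P where "P = p * (1 - p)"
  have vp: "v > 0" unfolding v_def using assms x0 by simp
  have Sp: "S > 0" unfolding S_def using vp by simp
  have Cp: "C > 0" unfolding C_def by simp
  have Ep: "E > 0" unfolding E_def by simp
  have lx: "ln x = m + 2 * v" and ly: "ln y = m - 2 * v" unfolding m_def v_def by (simp_all add: field_simps)
  have xe: "x = exp (m + 2 * v)" using lx x0 by (metis exp_ln)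
  have ye: "y = exp (m - 2 * v)" using ly assms(1) by (metis exp_ln)
  have C2: "C^2 = 1 + S^2" unfolding C_def S_def by (simp add: cosh_square_eq)
  have hxy: "x - y = 4 * E * S * C"
    using ex_sinh[of m "2*v"] unfolding xe ye E_def S_def C_def by (simp add: sinh_double)
  have hA: "AM x y = E * (1 + 2 * S^2)"
    using ex_cosh[of m "2*v"] unfolding AM_def xe ye E_def S_def
    by (simp add: cosh_double cosh_square_eq)
  have hL: "LM x y = E * S * C / v"
    using assms hxy unfolding LM_def by (simp add: lx ly)
  have sqe: "sqrt (exp a) = exp (a/2)" for a :: real
    by (rule real_sqrt_unique) (simp_all add: power2_eq_square flip: exp_add)
  have hsq: "(sqrt x - sqrt y)^2 = 4 * E * S^2"
  proof -
    have "sqrt x - sqrt y = 2 * exp (m/2) * S"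
      using ex_sinh[of "m/2" v] unfolding xe ye sqe S_def by (simp add: add_divide_distrib diff_divide_distrib)
    moreover have "(exp (m/2))^2 = E" unfolding E_def by (simp add: power2_eq_square flip: exp_add)
    ultimately show ?thesis by (simp add: power_mult_distrib)
  qed
  have second: "P * (sqrt x - sqrt y)^2 + LM x y \<le> AM x y"
  proof -
    have "(p - 1/2)^2 = 1/4 - P" by (simp add: P_def power2_eq_square field_simps)
    moreover have "0 \<le> (p - 1/2)^2" by simp
    ultimately have P4: "P \<le> 1/4" by linarith
    have "P * (4 * E * S^2) \<le> 1/4 * (4 * E * S^2)"
      by (rule mult_right_mono[OF P4]) (use Ep in simp)
    then have "P * (4 * E * S^2) \<le> E * S^2" by simp
    moreover have "E * S * C / v \<le> E * C^2"
    proof -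
      have "S \<le> v * C" unfolding S_def C_def using tanh_le vp by simp
      then have "E * S * C \<le> E * C^2 * v" using Ep Cp
        by (simp add: power2_eq_square mult_left_mono algebra_simps)
      then show ?thesis using vp by (simp add: divide_le_eq)
    qed
    ultimately show ?thesis unfolding hsq hL hA using C2 by (simp add: algebra_simps)
  qed
  have first: "WYD p x y \<le> P * (sqrt x - sqrt y)^2 + LM x y"
  proof (cases "p = 0 \<or> p = 1")
    case True
    then show ?thesis unfolding WYD_def P_def by auto
  next
    case False
    then have p0: "0 < p" "p < 1" using assms by auto
    have "\<bar>2*p-1\<bar> < 1" using p0 by auto
    then have "\<bar>2*p-1\<bar> * v < 1 * v" using vp by (intro mult_strict_right_mono) auto
    then have wv: "\<bar>w\<bar> < v" unfolding w_def using vp by (simp add: abs_mult)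
    define sw where "sw = sinh w"
    define cw where "cw = cosh w"
    define D where "D = S^2 - sw^2"
    have "\<bar>sw\<bar> < S" unfolding sw_def S_def using wv
      by (metis sinh_real_abs sinh_real_strict_mono strict_mono_less)
    then have Dp: "D > 0" unfolding D_def using Sp
      by (metis abs_ge_zero abs_of_pos diff_gt_0_iff_gt power2_abs power_strict_mono zero_less_numeral)
    have cw2: "cw^2 = 1 + sw^2" unfolding cw_def sw_def by (simp add: cosh_square_eq)
    have P4: "4 * P * v^2 = v^2 - w^2" unfolding P_def w_def by (simp add: power2_eq_square algebra_simps)
    have hp: "x powr p - y powr p = 2 * exp (p*m) * sinh (v + w)"
    proof -
      have "x powr p = exp (p*m + (v+w))" "y powr p = exp (p*m - (v+w))"
        using x0 assms(1) by (simp_all add: powr_def lx ly w_def algebra_simps)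
      then show ?thesis using ex_sinh by simp
    qed
    have hq: "x powr (1-p) - y powr (1-p) = 2 * exp ((1-p)*m) * sinh (v - w)"
    proof -
      have "x powr (1-p) = exp ((1-p)*m + (v-w))" "y powr (1-p) = exp ((1-p)*m - (v-w))"
        using x0 assms(1) by (simp_all add: powr_def lx ly w_def algebra_simps)
      then show ?thesis using ex_sinh by simp
    qed
    have hprod: "sinh (v + w) * sinh (v - w) = D"
    proof -
      have "sinh (v + w) * sinh (v - w) = (sinh v)^2 * (cosh w)^2 - (cosh v)^2 * (sinh w)^2"
        unfolding sinh_add sinh_diff by (simp add: power2_eq_square algebra_simps)
      also have "\<dots> = D" unfolding D_def S_def sw_def cosh_square_eq by (simp add: algebra_simps)
      finally show ?thesis .
    qed
    have hE: "exp (p*m) * exp ((1-p)*m) = E" unfolding E_def by (simp flip: exp_add add: algebra_simps)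
    have hW: "WYD p x y = 4 * P * E * S^2 * C^2 / D"
    proof -
      have "(x powr p - y powr p) * (x powr (1-p) - y powr (1-p)) = 4 * E * D"
        unfolding hp hq using hprod hE by (simp add: algebra_simps) (metis mult.commute mult.left_commute)
      then show ?thesis using False assms Ep Dp unfolding WYD_def hxy P_def
        by (simp add: power2_eq_square field_simps)
    qed
    have cr: "(v^2 - w^2) * S * cw^2 \<le> v * C * D"
      using core'[of w v] wv unfolding S_def C_def cw_def D_def sw_def by simp
    have "4 * P * E * S^2 * C^2 / D = P * (4 * E * S^2) + 4 * P * E * S^2 * cw^2 / D"
      using Dp C2 cw2 by (simp add: D_def field_simps)
    moreover have "4 * P * E * S^2 * cw^2 / D \<le> E * S * C / v"
    proof -
      have c2: "(4 * P * v^2) * S * cw^2 \<le> v * C * D" using cr unfolding P4[symmetric] .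
      have "v * ((4 * P * v) * S * cw^2) = (4 * P * v^2) * S * cw^2"
        by (simp add: power2_eq_square algebra_simps)
      also note c2
      also have "v * C * D = v * (C * D)" by simp
      finally have "v * ((4 * P * v) * S * cw^2) \<le> v * (C * D)" .
      then have "(4 * P * v) * S * cw^2 \<le> C * D" using vp by simp
      then have "(4 * P * v) * S * cw^2 * (E * S) \<le> C * D * (E * S)"
        using Ep Sp by (intro mult_right_mono) auto
      then have "4 * P * E * S^2 * cw^2 * v \<le> E * S * C * D"
        by (simp add: power2_eq_square algebra_simps)
      then show ?thesis using vp Dp by (simp add: divide_le_eq le_divide_eq mult.commute mult.left_commute)
    qed
    ultimately show ?thesis unfolding hW hsq hL by linarith
  qed
  show ?thesis using first second unfolding P_def by simp
qed

lemma LM_sym: "LM x y = LM y x"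
proof -
  have "(y - x) / (ln y - ln x) = (-(x - y)) / (-(ln x - ln y))" by simp
  also have "\<dots> = (x - y) / (ln x - ln y)" by (rule minus_divide_divide)
  finally show ?thesis unfolding LM_def by auto
qed

lemma WYD_sym: "WYD p x y = WYD p y x"
proof -
  have pe: "(x powr p - y powr p) * (x powr (1 - p) - y powr (1 - p)) =
        (y powr p - x powr p) * (y powr (1 - p) - x powr (1 - p))" by (simp add: algebra_simps)
  have se: "(x - y)^2 = (y - x)^2" by (simp add: power2_commute)
  show ?thesis unfolding WYD_def pe se LM_sym[of x y] by auto
qed

theorem theorem2p1:
  fixes x y p :: real
  assumes "x > 0" and "y > 0" and "0 \<le> p" and "p \<le> 1"
  shows "WYD p x y \<le> p * (1 - p) * (sqrt x - sqrt y)^2 + LM x y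
       \<and> p * (1 - p) * (sqrt x - sqrt y)^2 + LM x y \<le> AM x y"
proof (cases "x = y")
  case True
  then show ?thesis unfolding WYD_def LM_def AM_def by simp
next
  case False
  show ?thesis
  proof (cases "y < x")
    case True
    then show ?thesis using main_gt assms by blast
  next
    case False
    then have "x < y" using \<open>x \<noteq> y\<close> by simp
    then have "WYD p y x \<le> p * (1 - p) * (sqrt y - sqrt x)^2 + LM y x
       \<and> p * (1 - p) * (sqrt y - sqrt x)^2 + LM y x \<le> AM y x" using main_gt assms by blast
    then show ?thesis using WYD_sym[of p x y] LM_sym[of x y] 
      by (simp add: power2_commute AM_def add.commute)
  qed
qed

end
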